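(* Let $N\ge3$ and let $T_{ab}$ be a rank-2 tensor. The following are equivalent: (i) $T_{ac}T_b{}^c=fg_{ab}$ for some real $f\neq0$; (ii) for some $f>0$, both $T_{ac}T_b{}^c=fg_{ab}$ and $T_{ca}T^c{}_b=fg_{ab}$; (iii) $T_a{}^b$ defines a non-singular null-cone preserving map. Moreover, in this case $T_a{}^b$ is bi-preserving, $L_a{}^b=T_a{}^b/\sqrt f$ is a Lorentz transformation, and $T_{ab}\in\mathcal{DP}\cup-\mathcal{DP}$.
   Context: Lorentzian metric $g_{ab}$ of signature $(+,-,\dots,-)$ with a time orientation; null: $v\ne0$, $v_av^a=0$; causal: $v\neq0$, $v_av^a\ge0$. $T_a{}^b$ is a null-cone preserving map if $k^aT_a{}^b$ is null or zero for every null $k$, bi-preserving if also $T_a{}^bk_b$ is null or zero for every null $k$, non-singular if $\det(T_a{}^b)\neq0$. A Lorentz transformation is $L_a{}^b$ with $g_{cd}L_a{}^cL_b{}^d=g_{ab}$. $\mathcal{DP}$ is the set of rank-2 tensors $T_{ab}$ with $T_{ab}u^av^b\ge0$ for all causal future-pointing $u,v$; $-\mathcal{DP}=\{T:-T\in\mathcal{DP}\}$. *)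

theory Defs
  imports "HOL-Analysis.Analysis"
begin

text \<open>Tensors at a point of an N-dimensional spacetime, N = CARD('n), in a fixed
  coordinate basis. A covariant rank-2 tensor X_ab is the matrix with entries X $ a $ b;
  a vector v^a and a covector w_a are elements of real^'n.
  The metric g_ab is a matrix, its inverse g^ab is matrix_inv g.\<close>

definition minkowski :: "'n::finite \<Rightarrow> real^'n^'n" where
  "minkowski i0 = (\<chi> i j. if i = j then (if i = i0 then 1 else -1) else 0)"

definition lorentzian :: "real^('n::finite)^'n \<Rightarrow> bool" where
  "lorentzian g \<longleftrightarrow> transpose g = g \<and>
     (\<exists>(P::real^'n^'n) i0. invertible P \<and> transpose P ** g ** P = minkowski i0)"

definition gip :: "real^'n^'n \<Rightarrow> real^'n \<Rightarrow> real^'n \<Rightarrow> real" where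
  "gip g u v = u \<bullet> (g *v v)"

definition null_vec :: "real^'n^'n \<Rightarrow> real^'n \<Rightarrow> bool" where
  "null_vec g v \<longleftrightarrow> v \<noteq> 0 \<and> gip g v v = 0"

definition null_covec :: "real^'n^'n \<Rightarrow> real^'n \<Rightarrow> bool" where
  "null_covec g w \<longleftrightarrow> w \<noteq> 0 \<and> w \<bullet> (matrix_inv g *v w) = 0"

definition causal_vec :: "real^'n^'n \<Rightarrow> real^'n \<Rightarrow> bool" where
  "causal_vec g v \<longleftrightarrow> v \<noteq> 0 \<and> gip g v v \<ge> 0"

text \<open>Time orientation given by a timelike vector tau (g(tau,tau) > 0):
  a causal vector v is future-pointing iff g(tau,v) > 0.\<close>
definition future_causal :: "real^'n^'n \<Rightarrow> real^'n \<Rightarrow> real^'n \<Rightarrow> bool" where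
  "future_causal g tau v \<longleftrightarrow> causal_vec g v \<and> gip g tau v > 0"

text \<open>Mixed tensor T_a^b = T_ac g^cb.\<close>
definition mixed :: "real^'n^'n \<Rightarrow> real^'n^'n \<Rightarrow> real^'n^'n" where
  "mixed g T = T ** matrix_inv g"

text \<open>M = M_a^b is null-cone preserving: k^a M_a^b null or zero for every null k.\<close>
definition null_cone_preserving :: "real^'n^'n \<Rightarrow> real^'n^'n \<Rightarrow> bool" where
  "null_cone_preserving g M \<longleftrightarrow>
     (\<forall>k. null_vec g k \<longrightarrow> k v* M = 0 \<or> null_vec g (k v* M))"

definition bi_preserving :: "real^'n^'n \<Rightarrow> real^'n^'n \<Rightarrow> bool" where
  "bi_preserving g M \<longleftrightarrow> null_cone_preserving g M \<and>
     (\<forall>k. null_covec g k \<longrightarrow> M *v k = 0 \<or> null_covec g (M *v k))"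

definition lorentz_transf :: "real^'n^'n \<Rightarrow> real^'n^'n \<Rightarrow> bool" where
  "lorentz_transf g L \<longleftrightarrow> (\<forall>a b. (\<Sum>c\<in>UNIV. \<Sum>d\<in>UNIV. g$c$d * L$a$c * L$b$d) = g$a$b)"

definition DP :: "real^'n^'n \<Rightarrow> real^'n \<Rightarrow> real^'n^'n \<Rightarrow> bool" where
  "DP g tau T \<longleftrightarrow> (\<forall>u v. future_causal g tau u \<longrightarrow> future_causal g tau v \<longrightarrow>
       (\<Sum>a\<in>UNIV. \<Sum>b\<in>UNIV. T$a$b * u$a * v$b) \<ge> 0)"

end

theory Submission
  imports Defs
begin


lemma inv_props:
  fixes A :: "real^'n^'n"
  assumes "invertible A"
  shows "A ** matrix_inv A = mat 1" "matrix_inv A ** A = mat 1"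
proof -
  have "\<exists>A'. A ** A' = mat 1 \<and> A' ** A = mat 1" using assms unfolding invertible_def by blast
  then have "A ** matrix_inv A = mat 1 \<and> matrix_inv A ** A = mat 1"
    unfolding matrix_inv_def by (rule someI_ex)
  then show "A ** matrix_inv A = mat 1" "matrix_inv A ** A = mat 1" by auto
qed

lemma inv_sym:
  fixes g :: "real^'n^'n"
  assumes "transpose g = g" "invertible g"
  shows "transpose (matrix_inv g) = matrix_inv g"
proof -
  let ?B = "matrix_inv g"
  have "transpose ?B ** g = mat 1"
    by (metis assms inv_props(1) matrix_transpose_mul transpose_mat)
  then have "transpose ?B = (transpose ?B ** g) ** ?B"
    by (metis assms(2) inv_props(1) matrix_mul_assoc matrix_mul_rid)
  then show ?thesis using \<open>transpose ?B ** g = mat 1\<close> by (simp add: matrix_mul_lid)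
qed

lemma dot_mv: "(x::real^'n) \<bullet> ((A::real^'n^'n) *v y) = (transpose A *v x) \<bullet> y"
  by (metis dot_lmul_matrix transpose_matrix_vector)

lemma entry: "axis a 1 \<bullet> ((X::real^'n^'n) *v axis b 1) = X$a$b"
  by (simp add: matrix_vector_mult_basis inner_axis' column_def)


lemma mink_sym: "transpose (minkowski i0) = minkowski i0"
  by (auto simp: transpose_def minkowski_def vec_eq_iff)


definition mip :: "'n::finite \<Rightarrow> real^'n \<Rightarrow> real^'n \<Rightarrow> real" where
  "mip i0 y z = y \<bullet> (minkowski i0 *v z)"


definition sp :: "'n::finite \<Rightarrow> real^'n \<Rightarrow> real^'n" where
  "sp i0 y = (\<chi> k. if k = i0 then 0 else y$k)"

lemma mink_mv: "(minkowski i0 *v z) $ k = (if k = i0 then z$k else - z$k)"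
proof -
  have "(minkowski i0 *v z) $ k = (\<Sum>j\<in>UNIV. if k = j then (if k = i0 then z$j else - z$j) else 0)"
    unfolding matrix_vector_mult_def minkowski_def vec_lambda_beta
    by (rule sum.cong) auto
  then show ?thesis by (simp add: sum.delta)
qed

lemma mink_sq: "minkowski i0 ** minkowski i0 = mat 1"
  unfolding matrix_eq by (simp add: matrix_vector_mul_assoc[symmetric] vec_eq_iff mink_mv)

lemma det_mink: "det (minkowski i0) \<noteq> 0"
  by (metis det_I det_mul mink_sq mult_zero_left zero_neq_one)

lemma mip_formula: "mip i0 y z = y$i0 * z$i0 - sp i0 y \<bullet> sp i0 z"
proof -
  have "mip i0 y z + sp i0 y \<bullet> sp i0 z = (\<Sum>k\<in>UNIV. if k = i0 then y$k * z$k else 0)"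
    unfolding mip_def inner_vec_def sum.distrib[symmetric]
    by (rule sum.cong) (auto simp: mink_mv sp_def)
  then show ?thesis by (simp add: sum.delta)
qed

lemma sp_lin: "sp i0 (a *\<^sub>R x - b *\<^sub>R y) = a *\<^sub>R sp i0 x - b *\<^sub>R sp i0 y"
  by (auto simp: sp_def vec_eq_iff)

lemma mip_sym: "mip i0 y z = mip i0 z y"
  by (simp add: mip_formula inner_commute mult.commute)

lemma mip_expand: "mip i0 (a *\<^sub>R x - b *\<^sub>R y) (a *\<^sub>R x - b *\<^sub>R y)
   = a*a * mip i0 x x - 2*a*b * mip i0 x y + b*b * mip i0 y y"
  by (simp add: mip_formula sp_lin inner_diff_left inner_diff_right inner_commute algebra_simps)

lemma M3: "y$i0 = 0 \<Longrightarrow> mip i0 y y \<le> 0"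
  by (simp add: mip_formula)

lemma M2: assumes "mip i0 z z \<ge> 0" "z \<noteq> 0" shows "z$i0 \<noteq> 0"
proof
  assume z0: "z$i0 = 0"
  then have "sp i0 z \<bullet> sp i0 z \<le> 0" using assms(1) by (simp add: mip_formula)
  then have "sp i0 z = 0" by (metis inner_eq_zero_iff inner_ge_zero order_antisym)
  then have "z = 0" using z0 by (auto simp: sp_def vec_eq_iff split: if_splits)
  then show False using assms by simp
qed

lemma M1: assumes "mip i0 y y \<ge> 0" "mip i0 z z \<ge> 0" "y$i0 * z$i0 \<ge> 0"
  shows "mip i0 y z \<ge> 0"
proof -
  let ?a = "sp i0 y" and ?b = "sp i0 z"
  have "norm ?a ^ 2 \<le> \<bar>y$i0\<bar> ^ 2" using assms(1)
    unfolding power2_norm_eq_inner by (simp add: mip_formula power2_eq_square)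
  then have na: "norm ?a \<le> \<bar>y$i0\<bar>" by (rule power2_le_imp_le) simp
  have "norm ?b ^ 2 \<le> \<bar>z$i0\<bar> ^ 2" using assms(2)
    unfolding power2_norm_eq_inner by (simp add: mip_formula power2_eq_square)
  then have nb: "norm ?b \<le> \<bar>z$i0\<bar>" by (rule power2_le_imp_le) simp
  have "?a \<bullet> ?b \<le> norm ?a * norm ?b" by (rule norm_cauchy_schwarz)
  also have "\<dots> \<le> \<bar>y$i0\<bar> * \<bar>z$i0\<bar>" using na nb by (simp add: mult_mono)
  also have "\<dots> = y$i0 * z$i0" using assms(3) by (simp add: abs_mult[symmetric])
  finally show ?thesis by (simp add: mip_formula)
qed

lemma quad3:
  fixes X :: "real^'n^'n"
  shows "(a *\<^sub>R axis p 1 + b *\<^sub>R axis q 1 + c *\<^sub>R axis r 1) \<bullet> (X *v (a *\<^sub>R axis p 1 + b *\<^sub>R axis q 1 + c *\<^sub>R axis r 1))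
   = a*a*X$p$p + a*b*X$p$q + a*c*X$p$r + b*a*X$q$p + b*b*X$q$q + b*c*X$q$r
     + c*a*X$r$p + c*b*X$r$q + c*c*X$r$r"
  by (simp add: inner_add_left inner_add_right matrix_vector_right_distrib matrix_vector_mult_scaleR entry algebra_simps)


lemma gip_L: "gip g ((L::real^'n^'n) *v x) (L *v y) = x \<bullet> ((transpose L ** g ** L) *v y)"
  unfolding gip_def
  by (metis dot_mv inner_commute matrix_vector_mul_assoc)

lemma gip_P: fixes P g :: "real^'n^'n" assumes "transpose P ** g ** P = minkowski i0"
  shows "gip g (P *v y) (P *v z) = mip i0 y z"
  using gip_L[of g P y z] unfolding assms mip_def .

lemma gip_sym: assumes "transpose g = g" shows "gip g x y = gip g y x"
  unfolding gip_def by (metis assms dot_mv inner_commute)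

lemma coords: assumes "invertible (P::real^'n^'n)" shows "P *v (matrix_inv P *v x) = x"
  by (simp add: assms inv_props(1) matrix_vector_mul_assoc)

lemma cancelP:
  fixes P X Y :: "real^'n^'n"
  assumes "invertible P" "transpose P ** X ** P = transpose P ** Y ** P"
  shows "X = Y"
proof -
  let ?C = "matrix_inv P"
  have l: "transpose ?C ** transpose P = mat 1"
    by (metis assms(1) inv_props(1) matrix_transpose_mul transpose_mat)
  have r: "P ** ?C = mat 1" by (rule inv_props(1)[OF assms(1)])
  have "\<And>Z. transpose ?C ** (transpose P ** Z ** P) ** ?C = Z"
    by (metis l r matrix_mul_assoc matrix_mul_lid matrix_mul_rid)
  from this[of X] this[of Y] assms(2) show ?thesis by metis
qed

lemma mink_entries:
  "minkowski i0 $ i0 $ i0 = 1"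
  "i \<noteq> i0 \<Longrightarrow> minkowski i0 $ i $ i = -1"
  "i \<noteq> j \<Longrightarrow> minkowski i0 $ i $ j = 0"
  by (auto simp: minkowski_def)

lemma three_idx:
  fixes i0 :: "'n::finite"
  assumes "CARD('n) \<ge> 3"
  obtains i j :: 'n where "i \<noteq> i0" "j \<noteq> i0" "i \<noteq> j"
proof -
  have "\<exists>i::'n. i \<noteq> i0"
  proof (rule ccontr)
    assume "\<not> ?thesis"
    then have "(UNIV::'n set) = {i0}" by auto
    then have "CARD('n) = card {i0}" by metis
    then show False using assms by simp
  qed
  then obtain i :: 'n where i: "i \<noteq> i0" by blast
  have "\<exists>j::'n. j \<noteq> i0 \<and> j \<noteq> i"
  proof (rule ccontr)
    assume "\<not> ?thesis"
    then have "(UNIV::'n set) \<subseteq> {i0, i}" by auto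
    then have "CARD('n) \<le> card {i0, i}" by (rule card_mono[rotated]) simp
    also have "\<dots> \<le> 2" by (simp add: card_insert_if)
    finally show False using assms by simp
  qed
  then obtain j where "j \<noteq> i0" "j \<noteq> i" by blast
  then show ?thesis using that i by metis
qed

lemma f_nonneg:
  fixes g P L :: "real^'n^'n"
  assumes card: "CARD('n) \<ge> 3" and P: "invertible P"
    and eta: "transpose P ** g ** P = minkowski i0"
    and hL: "\<And>x y. gip g (L *v x) (L *v y) = f * gip g x y"
  shows "f \<ge> 0"
proof (rule ccontr)
  assume "\<not> f \<ge> 0"
  then have fneg: "f < 0" by simp
  obtain i j :: 'n where ij: "i \<noteq> i0" "j \<noteq> i0" "i \<noteq> j" using three_idx[OF card] by blast
  define u where "u k = matrix_inv P *v (L *v (P *v axis k 1))" for k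
  have mipu: "mip i0 (u a) (u b) = f * minkowski i0 $ a $ b" for a b
  proof -
    have "mip i0 (u a) (u b) = gip g (P *v u a) (P *v u b)" using gip_P[OF eta] by simp
    also have "\<dots> = gip g (L *v (P *v axis a 1)) (L *v (P *v axis b 1))"
      by (simp add: u_def coords[OF P])
    also have "\<dots> = f * mip i0 (axis a 1) (axis b 1)" by (simp add: hL gip_P[OF eta])
    finally show ?thesis by (simp add: mip_def entry)
  qed
  define a0 where "a0 = u i $ i0"
  define b0 where "b0 = u j $ i0"
  have "mip i0 (u i) (u i) > 0" using mipu[of i i] mink_entries(2)[OF ij(1)] fneg by simp
  then have "a0 \<noteq> 0" unfolding a0_def using M3[of "u i" i0] by force
  then have a2: "a0 * a0 > 0" by (auto simp: zero_less_mult_iff linorder_neq_iff)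
  have b2: "b0 * b0 \<ge> 0" by simp
  define z where "z = b0 *\<^sub>R u i - a0 *\<^sub>R u j"
  have "z $ i0 = 0" by (simp add: z_def a0_def b0_def)
  then have "mip i0 z z \<le> 0" by (rule M3)
  moreover have "mip i0 z z = b0*b0*(-f) + a0*a0*(-f)"
    unfolding z_def mip_expand mipu using ij by (simp add: mink_entries)
  moreover have "b0*b0*(-f) + a0*a0*(-f) > 0"
    using a2 b2 fneg by (smt (verit) mult_nonneg_nonneg mult_pos_pos)
  ultimately show False by linarith
qed


lemma conf:
  fixes g P L :: "real^'n^'n"
  assumes gs: "transpose g = g" and P: "invertible P"
    and eta: "transpose P ** g ** P = minkowski i0"
    and hQ: "\<And>y. mip i0 y y = 0 \<Longrightarrow> gip g (L *v (P *v y)) (L *v (P *v y)) = 0"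
  shows "transpose L ** g ** L = (transpose (L ** P) ** g ** (L ** P)) $ i0 $ i0 *\<^sub>R g"
proof -
  define A where "A = transpose (L ** P) ** g ** (L ** P)"
  have QA: "y \<bullet> (A *v y) = gip g (L *v (P *v y)) (L *v (P *v y))" for y
    using gip_L[of g "L ** P" y y] by (simp add: A_def matrix_vector_mul_assoc)
  have "transpose A = A" unfolding A_def
    by (simp add: matrix_transpose_mul gs matrix_mul_assoc)
  then have Asym: "A $ a $ b = A $ b $ a" for a b
    by (metis transpose_def vec_lambda_beta)
  have null: "y \<bullet> (A *v y) = 0" if "y \<bullet> (minkowski i0 *v y) = 0" for y
    using QA hQ that unfolding mip_def by simp
  let ?e = "\<lambda>k. axis k (1::real)"
  have h1: "A$i0$i0 + A$i0$i + A$i$i0 + A$i$i = 0" if "i \<noteq> i0" for i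
    using null[of "1 *\<^sub>R ?e i0 + 1 *\<^sub>R ?e i + 0 *\<^sub>R ?e i"] that
    unfolding quad3 by (simp add: mink_entries)
  have h2: "A$i0$i0 - A$i0$i - A$i$i0 + A$i$i = 0" if "i \<noteq> i0" for i
    using null[of "1 *\<^sub>R ?e i0 + (-1) *\<^sub>R ?e i + 0 *\<^sub>R ?e i"] that
    unfolding quad3 by (simp add: mink_entries)
  have c1: "A$i0$i = 0" "A$i$i0 = 0" "A$i$i = - A$i0$i0" if "i \<noteq> i0" for i
    using h1[OF that] h2[OF that] Asym[of i0 i] by linarith+
  have c2: "A$i$j = 0" if "i \<noteq> i0" "j \<noteq> i0" "i \<noteq> j" for i j
  proof -
    have "25*A$i0$i0 + 9*A$i$i + 16*A$j$j + 15*(A$i0$i + A$i$i0) + 20*(A$i0$j + A$j$i0)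
          + 12*(A$i$j + A$j$i) = 0"
      using null[of "5 *\<^sub>R ?e i0 + 3 *\<^sub>R ?e i + 4 *\<^sub>R ?e j"] that
      unfolding quad3 by (simp add: mink_entries algebra_simps)
    then show ?thesis using c1[OF that(1)] c1[OF that(2)] Asym[of i j] by (smt (verit))
  qed
  have AE: "A = A$i0$i0 *\<^sub>R minkowski i0"
  proof (subst vec_eq_iff, intro allI, subst vec_eq_iff, intro allI)
    fix a b
    show "A $ a $ b = (A$i0$i0 *\<^sub>R minkowski i0) $ a $ b"
      using c1[of a] c1[of b] c2[of a b]
      by (cases "a = i0"; cases "b = i0"; cases "a = b") (auto simp: mink_entries)
  qed
  have "transpose P ** (transpose L ** g ** L) ** P = A"
    by (simp add: A_def matrix_transpose_mul matrix_mul_assoc)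
  also have "\<dots> = A$i0$i0 *\<^sub>R (transpose P ** g ** P)" using AE eta by simp
  also have "\<dots> = transpose P ** (A$i0$i0 *\<^sub>R g) ** P"
    by (simp add: matrix_scalar_ac scalar_matrix_assoc)
  finally show ?thesis unfolding A_def[symmetric] by (rule cancelP[OF P])
qed

lemma sgn3: "(p::real)*q > 0 \<Longrightarrow> q*r > 0 \<Longrightarrow> p*r > 0"
  by (auto simp: zero_less_mult_iff)
lemma sgn3': "(p::real)*q < 0 \<Longrightarrow> q*r > 0 \<Longrightarrow> p*r < 0"
  by (auto simp: zero_less_mult_iff mult_less_0_iff)

lemma dp_lemma:
  fixes g P L :: "real^'n^'n" and tau :: "real^'n"
  assumes P: "invertible P"
    and eta: "transpose P ** g ** P = minkowski i0"
    and tau: "gip g tau tau > 0" and fpos: "f > 0"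
    and hL: "\<And>x y. gip g (L *v x) (L *v y) = f * gip g x y"
    and Linj: "\<And>x. L *v x = 0 \<Longrightarrow> x = 0"
  shows "(\<forall>u v. future_causal g tau u \<longrightarrow> future_causal g tau v \<longrightarrow> gip g (L *v u) v \<ge> 0)
       \<or> (\<forall>u v. future_causal g tau u \<longrightarrow> future_causal g tau v \<longrightarrow> gip g (L *v u) v \<le> 0)"
proof -
  define c where "c x = matrix_inv P *v x" for x
  define s where "s x = c x $ i0" for x
  have gc: "gip g x y = mip i0 (c x) (c y)" for x y
    using gip_P[OF eta, of "c x" "c y"] by (simp add: c_def coords[OF P])
  have cnz: "c x \<noteq> 0" if "x \<noteq> 0" for x
    using that coords[OF P, of x] by (auto simp: c_def)
  have K1: "s x \<noteq> 0" if "gip g x x \<ge> 0" "x \<noteq> 0" for x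
    using M2[of i0 "c x"] that cnz gc s_def by auto
  have K2: "gip g x y \<ge> 0" if "gip g x x \<ge> 0" "gip g y y \<ge> 0" "s x * s y \<ge> 0" for x y
    using M1[of i0 "c x" "c y"] that gc s_def by auto
  have mipneg: "mip i0 a (- b) = - mip i0 a b" for a b by (simp add: mip_def vec.neg)
  have K3: "s x * s y > 0" if "gip g x x \<ge> 0" "gip g y y \<ge> 0" "x \<noteq> 0" "y \<noteq> 0" "gip g x y > 0" for x y
  proof (rule ccontr)
    assume h: "\<not> s x * s y > 0"
    have nz: "s x * s y \<noteq> 0" using K1[of x] K1[of y] that by simp
    have "s x * s y < 0" using h nz by linarith
    then have "0 \<le> mip i0 (c x) (- c y)"
      using M1[of i0 "c x" "- c y"] that gc[of x x] gc[of y y] unfolding s_def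
      by (simp add: mipneg mip_sym[of i0 "- c y"])
    then show False using that(5) gc[of x y] mipneg by simp
  qed
  define w where "w = L *v tau"
  have tnz: "tau \<noteq> 0" using tau by (auto simp: gip_def)
  have ww: "gip g w w > 0" using tau fpos by (simp add: w_def hL)
  then have wnz: "w \<noteq> 0" by (auto simp: gip_def)
  have stw: "s tau * s w \<noteq> 0" using K1 tau ww tnz wnz by simp
  have key: "s w * s (L *v u) > 0 \<and> gip g (L *v u) (L *v u) \<ge> 0"
    if "future_causal g tau u" for u
  proof -
    have u: "u \<noteq> 0" "gip g u u \<ge> 0" "gip g tau u > 0"
      using that by (auto simp: future_causal_def causal_vec_def)
    have a: "L *v u \<noteq> 0" using Linj u(1) by blast
    have aa: "gip g (L *v u) (L *v u) \<ge> 0" using u(2) fpos by (simp add: hL)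
    have "gip g w (L *v u) > 0" using u(3) fpos by (simp add: w_def hL)
    then show ?thesis using K3[of w "L *v u"] ww wnz a aa by simp
  qed
  have futv: "s tau * s v > 0 \<and> gip g v v \<ge> 0" if "future_causal g tau v" for v
  proof -
    have u: "v \<noteq> 0" "gip g v v \<ge> 0" "gip g tau v > 0"
      using that by (auto simp: future_causal_def causal_vec_def)
    then show ?thesis using K3[of tau v] tau tnz by simp
  qed
  show ?thesis
  proof (cases "s tau * s w > 0")
    case True
    show ?thesis
    proof (rule disjI1, intro allI impI)
      fix u v assume fu: "future_causal g tau u" and fv: "future_causal g tau v"
      have "s tau * s (L *v u) > 0" using sgn3[OF True] key[OF fu] by blast
      then have "s (L *v u) * s tau > 0" by (simp add: mult.commute)
      then have "s (L *v u) * s v > 0" using sgn3 futv[OF fv] by blast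
      then show "gip g (L *v u) v \<ge> 0" using K2 key[OF fu] futv[OF fv] by simp
    qed
  next
    case False
    then have neg: "s tau * s w < 0" using stw by linarith
    show ?thesis
    proof (rule disjI2, intro allI impI)
      fix u v assume fu: "future_causal g tau u" and fv: "future_causal g tau v"
      have "s tau * s (L *v u) < 0" using sgn3'[OF neg] key[OF fu] by blast
      then have "s (L *v u) * s tau < 0" by (simp add: mult.commute)
      then have "s (L *v u) * s v < 0" using futv[OF fv]
        by (auto simp: zero_less_mult_iff mult_less_0_iff)
      then have "s v * s (L *v u) \<le> 0" by (simp add: mult.commute)
      then have "0 \<le> mip i0 (c v) (- c (L *v u))"
        using M1[of i0 "c v" "- c (L *v u)"] key[OF fu] futv[OF fv] gc unfolding s_def
        by (simp add: mipneg mip_sym[of i0 "- _"])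
      then show "gip g (L *v u) v \<le> 0" using gc[of "L *v u" v] mipneg mip_sym[of i0 "c (L *v u)" "c v"] by simp
    qed
  qed
qed


lemma lt_iff: "lorentz_transf g L \<longleftrightarrow> L ** g ** transpose L = g"
proof -
  have "(L ** g ** transpose L) $ a $ b = (\<Sum>c\<in>UNIV. \<Sum>d\<in>UNIV. g$c$d * L$a$c * L$b$d)" for a b
  proof -
    have "(L ** g ** transpose L) $ a $ b = (\<Sum>d\<in>UNIV. \<Sum>c\<in>UNIV. g$c$d * L$a$c * L$b$d)"
      unfolding matrix_matrix_mult_def transpose_def
      by (simp add: sum_distrib_left sum_distrib_right mult_ac)
    also have "\<dots> = (\<Sum>c\<in>UNIV. \<Sum>d\<in>UNIV. g$c$d * L$a$c * L$b$d)"
      by (rule sum.swap)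
    finally show ?thesis .
  qed
  then show ?thesis unfolding lorentz_transf_def by (auto simp: vec_eq_iff)
qed

lemma dp_sum: "(\<Sum>a\<in>UNIV. \<Sum>b\<in>UNIV. T$a$b * u$a * v$b) = u \<bullet> (T *v v)"
  unfolding inner_vec_def matrix_vector_mult_def
  by (simp add: sum_distrib_left mult.commute mult.left_commute)

lemma neg_mv: "(- (T::real^'n^'n)) *v v = - (T *v v)"
  by (simp add: vec_eq_iff matrix_vector_mult_def sum_negf)

lemma det_zero_mat: "det (0::real^'n^'n) = 0"
proof -
  obtain i :: 'n where True by blast
  have "row i (0::real^'n^'n) = 0" by (simp add: row_def vec_eq_iff)
  then show ?thesis by (rule det_zero_row)
qed



lemma mscal1: "(A::real^'n^'m) ** (k *\<^sub>R (B::real^'p^'n)) = k *\<^sub>R (A ** B)"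
  by (simp add: matrix_scalar_ac scalar_matrix_assoc)
lemma mscal2: "(k *\<^sub>R (A::real^'n^'m)) ** (B::real^'p^'n) = k *\<^sub>R (A ** B)"
  by (simp add: scalar_matrix_assoc)

theorem mainTheorem10:
  fixes g T :: "real^'n^'n" and tau :: "real^'n"
  assumes "CARD('n) \<ge> 3"
    and "lorentzian g"
    and "gip g tau tau > 0"
  shows "((\<exists>f::real. f \<noteq> 0 \<and> T ** matrix_inv g ** transpose T = f *\<^sub>R g)
           \<longleftrightarrow> (\<exists>f::real. f > 0 \<and> T ** matrix_inv g ** transpose T = f *\<^sub>R g
                      \<and> transpose T ** matrix_inv g ** T = f *\<^sub>R g))
       \<and> ((\<exists>f::real. f \<noteq> 0 \<and> T ** matrix_inv g ** transpose T = f *\<^sub>R g)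
           \<longleftrightarrow> (null_cone_preserving g (mixed g T) \<and> det (mixed g T) \<noteq> 0))
       \<and> ((\<exists>f::real. f \<noteq> 0 \<and> T ** matrix_inv g ** transpose T = f *\<^sub>R g)
           \<longrightarrow> bi_preserving g (mixed g T)
             \<and> (\<forall>f::real. T ** matrix_inv g ** transpose T = f *\<^sub>R g
                    \<longrightarrow> lorentz_transf g ((1 / sqrt f) *\<^sub>R mixed g T))
             \<and> (DP g tau T \<or> DP g tau (- T)))"
proof -
  note card = assms(1) and tau = assms(3)
  have gs: "transpose g = g" using assms(2) by (simp add: lorentzian_def)
  obtain P :: "real^'n^'n" and i0 where P: "invertible P" and eta: "transpose P ** g ** P = minkowski i0"
    using assms(2) by (auto simp: lorentzian_def)
  have "det (transpose P ** g ** P) \<noteq> 0" using eta det_mink by simp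
  then have "det g \<noteq> 0" by (simp add: det_mul)
  then have ginv: "invertible g" by (simp add: invertible_det_nz)
  define G where "G = matrix_inv g"
  have gG: "g ** G = mat 1" and Gg: "G ** g = mat 1" using inv_props[OF ginv] by (auto simp: G_def)
  have Gs: "transpose G = G" using inv_sym[OF gs ginv] by (simp add: G_def)
  have gGl: "X ** g ** G = X" for X :: "real^'n^'n"
    by (metis gG matrix_mul_assoc matrix_mul_rid)
  have Ggl: "X ** G ** g = X" for X :: "real^'n^'n"
    by (metis Gg matrix_mul_assoc matrix_mul_rid)
  have gnz: "g \<noteq> 0"
  proof
    assume "g = 0"
    then have "(mat 1 :: real^'n^'n) = 0" using gG by simp
    then show False by (metis det_I det_zero_mat zero_neq_one)
  qed
  define M where "M = mixed g T"
  have M_def': "M = T ** G" by (simp add: M_def mixed_def G_def)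
  have tM0: "transpose (T ** G) = G ** transpose T" by (simp add: matrix_transpose_mul Gs)
  have tM: "transpose M = G ** transpose T" by (simp add: M_def' tM0)
  have MgMt: "M ** g ** transpose M = T ** G ** transpose T"
  proof -
    have "M ** g ** transpose M = (T ** G) ** g ** (G ** transpose T)" by (simp only: tM0 M_def')
    then show ?thesis by (simp add: matrix_mul_assoc Ggl)
  qed
  have hLgen: "gip g (transpose M *v x) (transpose M *v y) = x \<bullet> ((T ** G ** transpose T) *v y)" for x y
    using gip_L[of g "transpose M" x y] by (simp add: MgMt)
  have Mg: "M ** g = T" by (simp add: M_def' Ggl)
  have E1imp: "f > 0 \<and> transpose T ** G ** T = f *\<^sub>R g \<and> null_cone_preserving g M \<and> det M \<noteq> 0
     \<and> bi_preserving g M \<and> (DP g tau T \<or> DP g tau (- T))"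
    if f0: "f \<noteq> 0" and H: "T ** G ** transpose T = f *\<^sub>R g" for f
  proof -
    let ?L = "transpose M"
    have hL: "gip g (?L *v x) (?L *v y) = f * gip g x y" for x y
    proof -
      have "gip g (?L *v x) (?L *v y) = x \<bullet> ((f *\<^sub>R g) *v y)" using hLgen[of x y] unfolding H .
      then show ?thesis by (simp add: gip_def scaleR_matrix_vector_assoc[symmetric])
    qed
    have "f \<ge> 0" by (rule f_nonneg[OF card P eta hL])
    then have fpos: "f > 0" using f0 by simp
    define X where "X = g ** transpose M ** G"
    define R where "R = (1/f) *\<^sub>R X"
    have "M ** X = (M ** g ** transpose M) ** G"
      by (simp add: X_def matrix_mul_assoc)
    also have "\<dots> = f *\<^sub>R (g ** G)" using MgMt H by (simp add: mscal2)
    finally have MX: "M ** X = f *\<^sub>R mat 1" using gG by simp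
    have MR: "M ** R = mat 1" using f0 MX by (simp add: R_def mscal1)
    then have RM: "R ** M = mat 1" by (simp add: matrix_left_right_inverse)
    have detM: "det M \<noteq> 0" using MR by (metis det_I det_mul mult_zero_left zero_neq_one)
    have Minj: "x = 0" if "M *v x = 0" for x
      by (metis RM matrix_vector_mul_assoc matrix_vector_mul_lid matrix_vector_mult_0_right that)
    have "transpose R ** transpose M = mat 1" by (metis MR matrix_transpose_mul transpose_mat)
    then have Linj: "x = 0" if "?L *v x = 0" for x
      by (metis matrix_vector_mul_assoc matrix_vector_mul_lid matrix_vector_mult_0_right that)
    have "X ** M = f *\<^sub>R mat 1"
    proof -
      have "(1/f) *\<^sub>R (X ** M) = mat 1" using RM
        by (simp add: R_def mscal2)
      then have "f *\<^sub>R ((1/f) *\<^sub>R (X ** M)) = f *\<^sub>R mat 1" by simp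
      then show ?thesis using f0 by simp
    qed
    moreover have "X ** M = transpose T ** G ** T ** G"
      unfolding X_def M_def' by (simp add: tM0 matrix_mul_assoc gG matrix_mul_lid)
    ultimately have X1: "transpose T ** G ** T ** G = f *\<^sub>R mat 1" by simp
    have E2: "transpose T ** G ** T = f *\<^sub>R g"
    proof -
      have "transpose T ** G ** T = (transpose T ** G ** T ** G) ** g"
        by (simp only: Ggl)
      also have "\<dots> = f *\<^sub>R g" using X1 by (simp add: mscal2 matrix_mul_lid)
      finally show ?thesis .
    qed
    have MGM: "transpose M ** G ** M = f *\<^sub>R G"
    proof -
      have "transpose M ** G ** M = G ** (transpose T ** G ** T) ** G"
        unfolding M_def' by (simp add: tM0 matrix_mul_assoc)
      also have "\<dots> = G ** (f *\<^sub>R g) ** G" using E2 by simp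
      also have "\<dots> = f *\<^sub>R G" by (simp add: mscal1 mscal2 Gg matrix_mul_lid)
      finally show ?thesis .
    qed
    have ncp: "null_cone_preserving g M"
      unfolding null_cone_preserving_def
    proof (intro allI impI)
      fix k assume k: "null_vec g k"
      have e: "k v* M = ?L *v k" by simp
      have "?L *v k \<noteq> 0" using Linj k by (auto simp: null_vec_def)
      moreover have "gip g (?L *v k) (?L *v k) = 0" using k hL[of k k] by (simp add: null_vec_def)
      ultimately show "k v* M = 0 \<or> null_vec g (k v* M)" unfolding e null_vec_def by simp
    qed
    have bi: "bi_preserving g M"
      unfolding bi_preserving_def
    proof (intro conjI ncp allI impI)
      fix k assume k: "null_covec g k"
      have "M *v k \<noteq> 0" using Minj k by (auto simp: null_covec_def)
      moreover have "(M *v k) \<bullet> (G *v (M *v k)) = 0"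
        using gip_L[of G M k k] k unfolding gip_def
        by (simp add: MGM null_covec_def G_def[symmetric] scaleR_matrix_vector_assoc[symmetric])
      ultimately show "M *v k = 0 \<or> null_covec g (M *v k)"
        unfolding null_covec_def G_def[symmetric] by simp
    qed
    have Tsum: "(\<Sum>a\<in>UNIV. \<Sum>b\<in>UNIV. T$a$b * u$a * v$b) = gip g (?L *v u) v" for u v
    proof -
      have "(\<Sum>a\<in>UNIV. \<Sum>b\<in>UNIV. T$a$b * u$a * v$b) = u \<bullet> ((M ** g) *v v)"
        by (simp add: dp_sum Mg)
      also have "\<dots> = gip g (?L *v u) v"
        by (simp add: gip_def matrix_vector_mul_assoc[symmetric] dot_mv[of u M])
      finally show ?thesis .
    qed
    have nTsum: "(\<Sum>a\<in>UNIV. \<Sum>b\<in>UNIV. (- T)$a$b * u$a * v$b) = - gip g (?L *v u) v" for u v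
      using Tsum[of u v] unfolding dp_sum by (simp only: neg_mv inner_minus_right)
    have "DP g tau T \<or> DP g tau (- T)"
      using dp_lemma[OF P eta tau fpos hL Linj] unfolding DP_def Tsum nTsum by auto
    note dp = this
    show ?thesis by (intro conjI fpos E2 ncp detM bi dp)
  qed
  have E1: "(\<exists>f. f \<noteq> 0 \<and> T ** G ** transpose T = f *\<^sub>R g) \<longleftrightarrow> null_cone_preserving g M \<and> det M \<noteq> 0"
  proof
    assume "\<exists>f. f \<noteq> 0 \<and> T ** G ** transpose T = f *\<^sub>R g"
    then show "null_cone_preserving g M \<and> det M \<noteq> 0" using E1imp by blast
  next
    assume h: "null_cone_preserving g M \<and> det M \<noteq> 0"
    let ?L = "transpose M"
    have hQ: "gip g (?L *v (P *v y)) (?L *v (P *v y)) = 0" if "mip i0 y y = 0" for y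
    proof (cases "y = 0")
      case True then show ?thesis by (simp add: gip_def)
    next
      case False
      then have "P *v y \<noteq> 0"
        by (metis P inv_props(2) matrix_vector_mul_assoc matrix_vector_mul_lid matrix_vector_mult_0_right)
      then have "null_vec g (P *v y)" using that gip_P[OF eta] by (simp add: null_vec_def)
      then have "(P *v y) v* M = 0 \<or> null_vec g ((P *v y) v* M)"
        using h by (simp add: null_cone_preserving_def)
      then show ?thesis by (auto simp: null_vec_def gip_def)
    qed
    define lam where "lam = (transpose (?L ** P) ** g ** (?L ** P)) $ i0 $ i0"
    have "transpose ?L ** g ** ?L = lam *\<^sub>R g"
      unfolding lam_def by (rule conf[OF gs P eta hQ])
    then have H: "T ** G ** transpose T = lam *\<^sub>R g" by (simp add: MgMt)
    have "lam \<noteq> 0"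
    proof
      assume "lam = 0"
      then have "M ** g ** transpose M = 0" using H MgMt by simp
      then have "det (M ** g ** transpose M) = 0" by (simp add: det_zero_mat)
      then show False using h \<open>det g \<noteq> 0\<close> by (simp add: det_mul det_transpose)
    qed
    then show "\<exists>f. f \<noteq> 0 \<and> T ** G ** transpose T = f *\<^sub>R g" using H by blast
  qed
  have LT: "lorentz_transf g ((1 / sqrt f) *\<^sub>R M)"
    if f0: "f' \<noteq> 0" and H': "T ** G ** transpose T = f' *\<^sub>R g" and H: "T ** G ** transpose T = f *\<^sub>R g" for f f'
  proof -
    have "f' *\<^sub>R g = f *\<^sub>R g" using H H' by simp
    then have "(f' - f) *\<^sub>R g = 0" by (simp add: scaleR_diff_left)
    then have "f = f'" using gnz by simp
    then have fpos: "f > 0" using E1imp[OF f0 H'] by simp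
    have "((1 / sqrt f) *\<^sub>R M) ** g ** transpose ((1 / sqrt f) *\<^sub>R M)
          = ((1 / sqrt f) * (1 / sqrt f)) *\<^sub>R (M ** g ** transpose M)"
      by (simp add: transpose_scalar mscal1 mscal2)
    also have "\<dots> = g" using fpos MgMt H by simp
    finally show ?thesis by (simp add: lt_iff)
  qed
  have A1: "(\<exists>f::real. f \<noteq> 0 \<and> T ** G ** transpose T = f *\<^sub>R g)
           \<longleftrightarrow> (\<exists>f::real. f > 0 \<and> T ** G ** transpose T = f *\<^sub>R g
                      \<and> transpose T ** G ** T = f *\<^sub>R g)"
  proof
    assume "\<exists>f::real. f \<noteq> 0 \<and> T ** G ** transpose T = f *\<^sub>R g"
    then obtain f where f: "f \<noteq> 0" "T ** G ** transpose T = f *\<^sub>R g" by blast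
    note c = E1imp[OF f]
    have "f > 0" "transpose T ** G ** T = f *\<^sub>R g"
      using c[THEN conjunct1] c[THEN conjunct2, THEN conjunct1] .
    then show "\<exists>f::real. f > 0 \<and> T ** G ** transpose T = f *\<^sub>R g
                      \<and> transpose T ** G ** T = f *\<^sub>R g" using f(2) by blast
  next
    assume "\<exists>f::real. f > 0 \<and> T ** G ** transpose T = f *\<^sub>R g
                      \<and> transpose T ** G ** T = f *\<^sub>R g"
    then obtain f where "f > 0" "T ** G ** transpose T = f *\<^sub>R g" by (elim exE conjE)
    then show "\<exists>f::real. f \<noteq> 0 \<and> T ** G ** transpose T = f *\<^sub>R g"
      by (intro exI[of _ f] conjI) simp_all
  qed
  have A3: "(\<exists>f::real. f \<noteq> 0 \<and> T ** G ** transpose T = f *\<^sub>R g)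
           \<longrightarrow> bi_preserving g M
             \<and> (\<forall>f::real. T ** G ** transpose T = f *\<^sub>R g
                    \<longrightarrow> lorentz_transf g ((1 / sqrt f) *\<^sub>R M))
             \<and> (DP g tau T \<or> DP g tau (- T))"
  proof
    assume "\<exists>f::real. f \<noteq> 0 \<and> T ** G ** transpose T = f *\<^sub>R g"
    then obtain f' where f: "f' \<noteq> 0" "T ** G ** transpose T = f' *\<^sub>R g" by blast
    note c = E1imp[OF f]
    have "bi_preserving g M" "DP g tau T \<or> DP g tau (- T)"
      using c[THEN conjunct2, THEN conjunct2, THEN conjunct2, THEN conjunct2, THEN conjunct1]
        c[THEN conjunct2, THEN conjunct2, THEN conjunct2, THEN conjunct2, THEN conjunct2] .
    moreover have "\<forall>f::real. T ** G ** transpose T = f *\<^sub>R g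
                    \<longrightarrow> lorentz_transf g ((1 / sqrt f) *\<^sub>R M)"
      by (intro allI impI LT[OF f])
    ultimately show "bi_preserving g M
             \<and> (\<forall>f::real. T ** G ** transpose T = f *\<^sub>R g
                    \<longrightarrow> lorentz_transf g ((1 / sqrt f) *\<^sub>R M))
             \<and> (DP g tau T \<or> DP g tau (- T))" by (intro conjI)
  qed
  note A1' = A1[unfolded G_def M_def]
  note E1' = E1[unfolded G_def M_def]
  note A3' = A3[unfolded G_def M_def]
  show ?thesis by (intro conjI A1' E1' A3')
qed

end
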